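(* Let $n\in\mathbb{N}$ and $(\sigma_1,\delta_2,\sigma_2,\dots,\delta_n,\sigma_n)\in\Sigma_n$, and let $$I_n(\sigma_1,\delta_2,\dots,\delta_n,\sigma_n)=\{x\in(0,1)\colon d_1(x)=\sigma_1,\ \epsilon_i(x)=\delta_i,\ d_i(x)=\sigma_i\ (2\le i\le n)\}.$$ If $\sigma_n$ is odd, this set is a singleton. If $\sigma_n$ is even, it is an open interval with endpoints $$x_1=\sum_{i=1}^{n-1}\frac{\delta_i}{\sigma_1\cdots\sigma_i}+\frac{\delta_n}{\sigma_1\cdots\sigma_{n-1}(\sigma_n-1)},\qquad x_2=\sum_{i=1}^{n-1}\frac{\delta_i}{\sigma_1\cdots\sigma_i}+\frac{\delta_n}{\sigma_1\cdots\sigma_{n-1}(\sigma_n+1)}$$ (with $\delta_1=1$), namely $(x_1,x_2)$ if $\delta_n=-1$ and $(x_2,x_1)$ if $\delta_n=1$. Consequently its length is $0$ if $\sigma_n$ is odd and $\frac{2}{\sigma_1\sigma_2\cdots\sigma_{n-1}(\sigma_n-1)(\sigma_n+1)}$ if $\sigma_n$ is even.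
   Context: Define $T\colon[0,1)\to[0,1)$ by: for $k\in\mathbb{N}$, $Tx=\lceil 1/x\rceil x-1$ if $x\in(\frac{1}{2k},\frac{1}{2k-1})$; $Tx=1-\lfloor 1/x\rfloor x$ if $x\in(\frac{1}{2k+1},\frac{1}{2k})$; $Tx=0$ if $x\in\{0\}\cup\{1/n\colon n\ge 2\}$. For $x\in(0,1)$ define $d_1(x)=\lceil 1/x\rceil$, $s_1(x)=1$ if $x\in[\frac{1}{2k},\frac{1}{2k-1})$ for some $k$, and $d_1(x)=\lfloor 1/x\rfloor$, $s_1(x)=-1$ if $x\in[\frac{1}{2k+1},\frac{1}{2k})$ for some $k$. Set $d_{n+1}(x)=d_1(T^nx)$, $s_{n+1}(x)=s_1(T^nx)$ (when $T^nx\ne0$), $\epsilon_1(x)=1$, $\epsilon_{n+1}(x)=\prod_{k=1}^n s_k(x)$. $\Sigma_1=\{(\sigma_1)\colon \sigma_1\in\mathbb{N},\sigma_1\ge2\}$, and for $n\ge2$, $\Sigma_n$ is the set of tuples $(\sigma_1,\delta_2,\sigma_2,\dots,\delta_n,\sigma_n)$ with $\delta_i\in\{1,-1\}$, positive integers $2\le\sigma_1\le\sigma_2\le\cdots\le\sigma_n$ with $\sigma_i$ even for $1\le i\le n-1$, and (with $\delta_1:=1$) $\sigma_{i+1}\ge\sigma_i+2$ whenever $\delta_{i+1}=-\delta_i$, $1\le i\le n-1$. *)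

theory Defs
  imports "HOL-Analysis.Analysis"
begin

definition Tmap :: "real \<Rightarrow> real" where
  "Tmap x =
     (if x = 0 \<or> (\<exists>m::nat. m \<ge> 2 \<and> x = 1 / real m) then 0
      else if (\<exists>k::nat. k \<ge> 1 \<and> 1 / real (2*k) < x \<and> x < 1 / real (2*k - 1))
        then real_of_int \<lceil>1 / x\<rceil> * x - 1
      else if (\<exists>k::nat. k \<ge> 1 \<and> 1 / real (2*k+1) < x \<and> x < 1 / real (2*k))
        then 1 - real_of_int \<lfloor>1 / x\<rfloor> * x
      else 0)"

definition d1 :: "real \<Rightarrow> int" where
  "d1 x = (if \<exists>k::nat. k \<ge> 1 \<and> 1 / real (2*k) \<le> x \<and> x < 1 / real (2*k - 1)
           then \<lceil>1 / x\<rceil> else \<lfloor>1 / x\<rfloor>)"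

definition s1 :: "real \<Rightarrow> int" where
  "s1 x = (if \<exists>k::nat. k \<ge> 1 \<and> 1 / real (2*k) \<le> x \<and> x < 1 / real (2*k - 1)
           then 1 else -1)"

text \<open>Digits, 1-indexed: d_n(x) = d_1(T^(n-1) x), meaningful when T^(n-1) x \<noteq> 0.\<close>
definition digit :: "nat \<Rightarrow> real \<Rightarrow> int" where
  "digit n x = d1 ((Tmap ^^ (n - 1)) x)"

definition sdigit :: "nat \<Rightarrow> real \<Rightarrow> int" where
  "sdigit n x = s1 ((Tmap ^^ (n - 1)) x)"

definition eps :: "nat \<Rightarrow> real \<Rightarrow> int" where
  "eps n x = (\<Prod>k\<in>{1..<n}. sdigit k x)"

text \<open>Admissible tuples Sigma_n, represented by \<sigma>, \<delta> on indices 1..n, with the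
  convention \<delta> 1 = 1.\<close>
definition in_Sigma :: "nat \<Rightarrow> (nat \<Rightarrow> nat) \<Rightarrow> (nat \<Rightarrow> int) \<Rightarrow> bool" where
  "in_Sigma n \<sigma> \<delta> \<longleftrightarrow>
     n \<ge> 1 \<and> \<delta> 1 = 1 \<and>
     (\<forall>i\<in>{2..n}. \<delta> i = 1 \<or> \<delta> i = -1) \<and>
     2 \<le> \<sigma> 1 \<and>
     (\<forall>i\<in>{1..<n}. \<sigma> i \<le> \<sigma> (i+1)) \<and>
     (\<forall>i\<in>{1..<n}. even (\<sigma> i)) \<and>
     (\<forall>i\<in>{1..<n}. \<delta> (i+1) = - \<delta> i \<longrightarrow> \<sigma> (i+1) \<ge> \<sigma> i + 2)"

definition cyl :: "nat \<Rightarrow> (nat \<Rightarrow> nat) \<Rightarrow> (nat \<Rightarrow> int) \<Rightarrow> real set" where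
  "cyl n \<sigma> \<delta> = {x. 0 < x \<and> x < 1 \<and>
      (\<forall>i\<in>{1..n}. (Tmap ^^ (i - 1)) x \<noteq> 0 \<and> digit i x = int (\<sigma> i)) \<and>
      (\<forall>i\<in>{2..n}. eps i x = \<delta> i)}"

end

theory Submission
  imports Defs
begin

lemma inv_le_iff: "0 < x \<Longrightarrow> 0 < c \<Longrightarrow> (1 / c \<le> x) = (1/x \<le> c)" for x c :: real
  by (auto simp: field_simps)
lemma inv_lt_iff: "0 < x \<Longrightarrow> 0 < c \<Longrightarrow> (1 / c < x) = (1/x < c)" for x c :: real
  by (auto simp: field_simps)
lemma lt_inv_iff: "0 < x \<Longrightarrow> 0 < c \<Longrightarrow> (x < 1 / c) = (c < 1/x)" for x c :: real
  by (auto simp: field_simps)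

lemma reg1_iff:
  assumes "0 < x" "k \<ge> 1"
  shows "(1 / real (2*k) \<le> x \<and> x < 1 / real (2*k - 1)) \<longleftrightarrow> (2 * real k - 1 < 1/x \<and> 1/x \<le> 2 * real k)"
proof -
  have e: "real (2*k - 1) = 2 * real k - 1" using assms by (simp add: of_nat_diff)
  have p: "0 < 2 * real k - 1" "0 < 2 * real k" using assms by auto
  have e1: "real (2*k) = 2*real k" by simp
  show ?thesis unfolding e e1 using inv_le_iff[OF assms(1) p(2)] lt_inv_iff[OF assms(1) p(1)] by blast
qed

lemma reg1o_iff:
  assumes "0 < x" "k \<ge> 1"
  shows "(1 / real (2*k) < x \<and> x < 1 / real (2*k - 1)) \<longleftrightarrow> (2 * real k - 1 < 1/x \<and> 1/x < 2 * real k)"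
proof -
  have e: "real (2*k - 1) = 2 * real k - 1" using assms by (simp add: of_nat_diff)
  have p: "0 < 2 * real k - 1" "0 < 2 * real k" using assms by auto
  have e1: "real (2*k) = 2*real k" by simp
  show ?thesis unfolding e e1 using inv_lt_iff[OF assms(1) p(2)] lt_inv_iff[OF assms(1) p(1)] by blast
qed

lemma reg2o_iff:
  assumes "0 < x" "k \<ge> 1"
  shows "(1 / real (2*k+1) < x \<and> x < 1 / real (2*k)) \<longleftrightarrow> (2 * real k < 1/x \<and> 1/x < 2 * real k + 1)"
proof -
  have p: "0 < 2 * real k + 1" "0 < 2 * real k" using assms by auto
  have e1: "real (2*k) = 2*real k" "real (2*k+1) = 2*real k + 1" by simp_all
  show ?thesis unfolding e1 using inv_lt_iff[OF assms(1) p(1)] lt_inv_iff[OF assms(1) p(2)] by blast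
qed

lemma not_reg1:
  assumes "0 < x" "k \<ge> 1" "2 * real k < 1/x" "1/x \<le> 2 * real k + 1"
  shows "\<not> (\<exists>k'::nat. k' \<ge> 1 \<and> 1 / real (2*k') \<le> x \<and> x < 1 / real (2*k' - 1))"
proof
  assume "\<exists>k'::nat. k' \<ge> 1 \<and> 1 / real (2*k') \<le> x \<and> x < 1 / real (2*k' - 1)"
  then obtain k' where k': "k' \<ge> 1" "1 / real (2*k') \<le> x" "x < 1 / real (2*k' - 1)" by blast
  then have "2 * real k' - 1 < 1/x" "1/x \<le> 2 * real k'" using reg1_iff[OF assms(1) k'(1)] by auto
  with assms have "real k < real k'" "real k' < real k + 1" by linarith+
  then have "k < k'" "k' < k + 1" by linarith+
  then show False by linarith
qed

lemma d1_reg1: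
  assumes "0 < x" "k \<ge> 1" "2 * real k - 1 < 1/x" "1/x \<le> 2 * real k"
  shows "d1 x = 2 * int k" "s1 x = 1"
proof -
  have ex: "\<exists>k::nat. k \<ge> 1 \<and> 1 / real (2*k) \<le> x \<and> x < 1 / real (2*k - 1)"
    using reg1_iff[OF assms(1,2)] assms by blast
  have "\<lceil>1/x\<rceil> = 2 * int k" by (rule ceiling_unique) (use assms in auto)
  then show "d1 x = 2 * int k" "s1 x = 1" unfolding d1_def s1_def by (simp_all only: if_P[OF ex])
qed

lemma d1_reg2:
  assumes "0 < x" "k \<ge> 1" "2 * real k < 1/x" "1/x \<le> 2 * real k + 1"
  shows "d1 x = \<lfloor>1/x\<rfloor>" "s1 x = -1"
  unfolding d1_def s1_def by (simp_all only: if_not_P[OF not_reg1[OF assms]])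

lemma T_reg1:
  assumes "0 < x" "k \<ge> 1" "2 * real k - 1 < 1/x" "1/x < 2 * real k"
  shows "Tmap x = 2 * real k * x - 1"
proof -
  have n1: "\<not> (\<exists>m::nat. m \<ge> 2 \<and> x = 1 / real m)"
  proof
    assume "\<exists>m::nat. m \<ge> 2 \<and> x = 1 / real m"
    then obtain m :: nat where "x = 1 / real m" "m \<ge> 2" by blast
    then have "1/x = real m" by simp
    with assms have "real k * 2 - 1 < real m" "real m < real k * 2" by linarith+
    then have "int k * 2 - 1 < int m" "int m < int k * 2" by linarith+
    then show False by linarith
  qed
  have ex: "\<exists>k::nat. k \<ge> 1 \<and> 1 / real (2*k) < x \<and> x < 1 / real (2*k - 1)"
    using reg1o_iff[OF assms(1,2)] assms by blast
  have "\<lceil>1/x\<rceil> = 2 * int k" by (rule ceiling_unique) (use assms in auto)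
  moreover have c: "\<not>(x = 0 \<or> (\<exists>m::nat. m \<ge> 2 \<and> x = 1 / real m))" using n1 assms by auto
  ultimately show ?thesis unfolding Tmap_def by (simp only: if_not_P[OF c] if_P[OF ex]) simp
qed

lemma T_reg2:
  assumes "0 < x" "k \<ge> 1" "2 * real k < 1/x" "1/x < 2 * real k + 1"
  shows "Tmap x = 1 - 2 * real k * x"
proof -
  have n1: "\<not> (\<exists>m::nat. m \<ge> 2 \<and> x = 1 / real m)"
  proof
    assume "\<exists>m::nat. m \<ge> 2 \<and> x = 1 / real m"
    then obtain m :: nat where "x = 1 / real m" "m \<ge> 2" by blast
    then have "1/x = real m" by simp
    with assms have "real k * 2 < real m" "real m < real k * 2 + 1" by linarith+
    then have "int k * 2 < int m" "int m < int k * 2 + 1" by linarith+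
    then show False by linarith
  qed
  have n2: "\<not> (\<exists>k::nat. k \<ge> 1 \<and> 1 / real (2*k) < x \<and> x < 1 / real (2*k - 1))"
    using not_reg1[OF assms(1,2,3)] assms(4) by force
  have ex: "\<exists>k::nat. k \<ge> 1 \<and> 1 / real (2*k+1) < x \<and> x < 1 / real (2*k)"
    using reg2o_iff[OF assms(1,2)] assms by blast
  have "\<lfloor>1/x\<rfloor> = 2 * int k" by (rule floor_unique) (use assms in auto)
  moreover have c: "\<not>(x = 0 \<or> (\<exists>m::nat. m \<ge> 2 \<and> x = 1 / real m))" using n1 assms by auto
  ultimately show ?thesis unfolding Tmap_def by (simp only: if_not_P[OF c] if_not_P[OF n2] if_P[OF ex]) simp
qed

lemma T_int: "m \<ge> 2 \<Longrightarrow> x = 1 / real m \<Longrightarrow> Tmap x = 0"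
  unfolding Tmap_def by auto

lemma split_u:
  assumes "0 < x" "x < 1"
  obtains k :: nat where "k \<ge> 1" "2 * real k - 1 < 1/x" "1/x \<le> 2 * real k"
  | k :: nat where "k \<ge> 1" "2 * real k < 1/x" "1/x \<le> 2 * real k + 1"
proof -
  have u1: "1 < 1/x" using assms by (simp add: field_simps)
  define c where "c = \<lceil>1/x\<rceil>"
  have c1: "of_int c - 1 < 1/x" "1/x \<le> of_int c" unfolding c_def by linarith+
  have c2: "c \<ge> 2" using u1 c1 by linarith
  show ?thesis
  proof (cases "even c")
    case True
    then obtain k where k: "c = 2 * k" by blast
    have "k \<ge> 1" using c2 k by linarith
    then have "nat k \<ge> 1" "real (nat k) = of_int k" by auto
    then show ?thesis using that(1)[of "nat k"] c1 k by auto
  next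
    case False
    then obtain k where k: "c = 2 * k + 1" using oddE by blast
    have "k \<ge> 1" using c2 k by linarith
    then have "nat k \<ge> 1" "real (nat k) = of_int k" by auto
    then show ?thesis using that(2)[of "nat k"] c1 k by auto
  qed
qed

lemma T_inv:
  assumes "0 < x" "x < 1"
  shows "x = (1 + real_of_int (s1 x) * Tmap x) / real_of_int (d1 x)" "0 \<le> Tmap x" "Tmap x < 1"
proof -
  have u1: "1 < 1/x" using assms by (simp add: field_simps)
  have "x = (1 + real_of_int (s1 x) * Tmap x) / real_of_int (d1 x) \<and> 0 \<le> Tmap x \<and> Tmap x < 1"
  proof (cases rule: split_u[OF assms])
    case (1 k)
    note d = d1_reg1[OF assms(1) 1]
    show ?thesis
    proof (cases "1/x = 2 * real k")
      case True
      have "x = 1/(1/x)" by simp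
      also have "\<dots> = 1 / real (2*k)" using True by simp
      finally have "x = 1 / real (2*k)" .
      moreover then have "Tmap x = 0" using 1 by (intro T_int[of "2*k"]) auto
      ultimately show ?thesis using d by simp
    next
      case False
      then have lt: "1/x < 2 * real k" using 1 by simp
      have T: "Tmap x = 2 * real k * x - 1" by (rule T_reg1) (use 1 lt assms in auto)
      have a: "1 < 2 * real k * x" using lt assms by (simp add: field_simps)
      have b: "x * (2 * real k - 1) < 1" using 1 assms
        by (simp add: field_simps)
      have "x = (1 + 1 * Tmap x) / (2 * real k)" using T 1 by (simp add: field_simps)
      moreover have "2*real k*x < 1 + x" using b by (simp add: algebra_simps)
      then have "Tmap x < 1" using T assms by linarith
      ultimately show ?thesis using d T a by simp
    qed
  next
    case (2 k)
    note d = d1_reg2[OF assms(1) 2]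
    show ?thesis
    proof (cases "1/x = 2 * real k + 1")
      case True
      have "x = 1/(1/x)" by simp
      also have "\<dots> = 1 / real (2*k+1)" using True by simp
      finally have "x = 1 / real (2*k+1)" .
      moreover then have "Tmap x = 0" using 2 by (intro T_int[of "2*k+1"]) auto
      moreover have "\<lfloor>1/x\<rfloor> = 2 * int k + 1"
      proof -
        have "1/x = real_of_int (2 * int k + 1)" using True by simp
        then show ?thesis by (simp only: floor_of_int)
      qed
      ultimately show ?thesis using d by simp
    next
      case False
      then have lt: "1/x < 2 * real k + 1" using 2 by simp
      have T: "Tmap x = 1 - 2 * real k * x" by (rule T_reg2) (use 2 lt assms in auto)
      have f: "\<lfloor>1/x\<rfloor> = 2 * int k" by (rule floor_unique) (use 2 lt in auto)
      have a: "2 * real k * x < 1" using 2 assms by (simp add: field_simps)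
      have b: "0 < 2 * real k * x" using 2 assms by simp
      have "x = (1 + (-1) * Tmap x) / (2 * real k)" using T 2 by (simp add: field_simps)
      moreover have "0 \<le> Tmap x" "Tmap x < 1" using T a b by linarith+
      ultimately show ?thesis using d f by simp
    qed
  qed
  then show "x = (1 + real_of_int (s1 x) * Tmap x) / real_of_int (d1 x)" "0 \<le> Tmap x" "Tmap x < 1"
    by auto
qed

definition Yset :: "nat \<Rightarrow> real set" where
  "Yset m = {y. 0 < y \<and> y < 1 \<and> d1 y = int m}"

lemma Y_even:
  assumes "k \<ge> 1"
  shows "Yset (2*k) = {1 / (2 * real k + 1)<..<1 / (2 * real k - 1)}"
proof (intro set_eqI iffI)
  fix y assume "y \<in> Yset (2*k)"
  then have y: "0 < y" "y < 1" "d1 y = 2 * int k" unfolding Yset_def by auto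
  have p: "0 < 2 * real k + 1" "0 < 2 * real k - 1" using assms by auto
  have "2 * real k - 1 < 1/y \<and> 1/y < 2 * real k + 1"
  proof (cases rule: split_u[OF y(1,2)])
    case (1 k')
    have "2 * int k' = 2 * int k" using d1_reg1[OF y(1) 1] y(3) by simp
    then have "k' = k" by simp
    then show ?thesis using 1 by simp
  next
    case (2 k')
    have f: "\<lfloor>1/y\<rfloor> = 2 * int k" using d1_reg2[OF y(1) 2] y(3) by simp
    show ?thesis
    proof (cases "1/y = 2 * real k' + 1")
      case True
      have "1/y = real_of_int (2 * int k' + 1)" using True by simp
      then have "\<lfloor>1/y\<rfloor> = 2 * int k' + 1" by (simp only: floor_of_int)
      with f show ?thesis by presburger
    next
      case False
      then have lt: "1/y < 2 * real k' + 1" using 2 by simp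
      have "\<lfloor>1/y\<rfloor> = 2 * int k'" by (rule floor_unique) (use 2 lt in auto)
      with f have "k' = k" by simp
      then show ?thesis using 2 lt by simp
    qed
  qed
  then show "y \<in> {1 / (2 * real k + 1)<..<1 / (2 * real k - 1)}"
    using inv_lt_iff[OF y(1) p(1)] lt_inv_iff[OF y(1) p(2)] by simp
next
  fix y assume "y \<in> {1 / (2 * real k + 1)<..<1 / (2 * real k - 1)}"
  then have y: "1 / (2 * real k + 1) < y" "y < 1 / (2 * real k - 1)" by auto
  have p: "0 < 2 * real k + 1" "0 < 2 * real k - 1" using assms by auto
  have y0: "0 < y" using y(1) p(1) by (smt (verit) divide_pos_pos)
  have u: "2 * real k - 1 < 1/y" "1/y < 2 * real k + 1"
    using y inv_lt_iff[OF y0 p(1)] lt_inv_iff[OF y0 p(2)] by auto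
  have "1 / (2 * real k - 1) \<le> 1" using assms by (simp add: field_simps)
  then have y1: "y < 1" using y by linarith
  have "d1 y = 2 * int k"
  proof (cases "1/y \<le> 2 * real k")
    case True
    then show ?thesis using d1_reg1[OF y0 assms u(1) True] by simp
  next
    case False
    have "\<lfloor>1/y\<rfloor> = 2 * int k" by (rule floor_unique) (use False u in auto)
    then show ?thesis using d1_reg2[OF y0 assms _ ] False u by simp
  qed
  then show "y \<in> Yset (2*k)" unfolding Yset_def using y0 y1 by simp
qed

lemma Y_odd:
  assumes "k \<ge> 1"
  shows "Yset (2*k+1) = {1 / (2 * real k + 1)}"
proof (intro set_eqI iffI)
  fix y assume "y \<in> Yset (2*k+1)"
  then have y: "0 < y" "y < 1" "d1 y = 2 * int k + 1" unfolding Yset_def by auto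
  have "1/y = 2 * real k + 1"
  proof (cases rule: split_u[OF y(1,2)])
    case (1 k')
    have "2 * int k' = 2 * int k + 1" using d1_reg1[OF y(1) 1] y(3) by simp
    then have False by presburger
    then show ?thesis ..
  next
    case (2 k')
    have f: "\<lfloor>1/y\<rfloor> = 2 * int k + 1" using d1_reg2[OF y(1) 2] y(3) by simp
    show ?thesis
    proof (cases "1/y = 2 * real k' + 1")
      case True
      have "1/y = real_of_int (2 * int k' + 1)" using True by simp
      then have "\<lfloor>1/y\<rfloor> = 2 * int k' + 1" by (simp only: floor_of_int)
      with f have "k' = k" by simp
      with True show ?thesis by simp
    next
      case False
      then have lt: "1/y < 2 * real k' + 1" using 2 by simp
      have "\<lfloor>1/y\<rfloor> = 2 * int k'" by (rule floor_unique) (use 2 lt in auto)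
      with f have False by presburger
      then show ?thesis ..
    qed
  qed
  note e = this
  have "y = 1/(1/y)" by simp
  also have "\<dots> = 1 / (2 * real k + 1)" using e by simp
  finally show "y \<in> {1 / (2 * real k + 1)}" by simp
next
  fix y assume "y \<in> {1 / (2 * real k + 1)}"
  then have y: "y = 1 / (2 * real k + 1)" by simp
  have y0: "0 < y" using y by simp
  have u: "1/y = 2 * real k + 1" using y by simp
  have "1 / (2 * real k + 1) < 1" using assms by (simp add: divide_less_eq)
  then have y1: "y < 1" using y by simp
  have "\<lfloor>1/y\<rfloor> = 2 * int k + 1"
  proof -
    have "1/y = real_of_int (2 * int k + 1)" using u by simp
    then show ?thesis by (simp only: floor_of_int)
  qed
  then have "d1 y = 2 * int k + 1" using d1_reg2[OF y0 assms] u by simp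
  then show "y \<in> Yset (2*k+1)" unfolding Yset_def using y0 y1 by simp
qed

lemma Y_bound:
  assumes "m \<ge> 2" "y \<in> Yset m"
  shows "0 < y" "y < 1 / (real m - 1)"
proof -
  show "0 < y" using assms unfolding Yset_def by auto
  show "y < 1 / (real m - 1)"
  proof (cases "even m")
    case True
    then obtain k where k: "m = 2*k" by blast
    with assms have "k \<ge> 1" by simp
    from assms(2)[unfolded k Y_even[OF this]] show ?thesis using k by simp
  next
    case False
    then obtain k where k: "m = 2*k+1" using oddE by blast
    with assms have k1: "k \<ge> 1" by simp
    from assms(2)[unfolded k Y_odd[OF k1]] have "y = 1 / (2 * real k + 1)" by simp
    moreover have "1 / (2 * real k + 1) < 1 / (2 * real k)" using k1 by (simp add: frac_less2)
    ultimately show ?thesis using k by simp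
  qed
qed

lemma fwd1:
  assumes "k \<ge> 1" "0 < z" "z < 1 / (2 * real k - 1)" "x = (1 + z) / (2 * real k)"
  shows "0 < x" "x < 1" "d1 x = 2 * int k" "s1 x = 1" "Tmap x = z"
proof -
  have p: "0 < 2 * real k - 1" using assms by simp
  have zb: "z * (2 * real k - 1) < 1" using assms(3) p by (simp add: field_simps)
  show x0: "0 < x" using assms by simp
  have "1 / (2 * real k - 1) \<le> 1" using assms by (simp add: field_simps)
  then have "z < 1" using assms by linarith
  then have "1 + z < 2 * real k" using assms by linarith
  then show "x < 1" using assms by (simp add: divide_less_eq)
  have u: "1/x = 2 * real k / (1 + z)" using assms by simp
  have u1: "2 * real k - 1 < 1/x" unfolding u using zb assms(2) by (simp add: field_simps)
  have u2: "1/x < 2 * real k" unfolding u using assms by (simp add: field_simps)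
  show "d1 x = 2 * int k" "s1 x = 1" using d1_reg1[OF x0 assms(1) u1] u2 by auto
  show "Tmap x = z" using T_reg1[OF x0 assms(1) u1 u2] assms by simp
qed

lemma fwd2:
  assumes "k \<ge> 1" "0 < z" "z < 1 / (2 * real k + 1)" "x = (1 - z) / (2 * real k)"
  shows "0 < x" "x < 1" "d1 x = 2 * int k" "s1 x = -1" "Tmap x = z"
proof -
  have p: "0 < 2 * real k + 1" using assms by simp
  have zb: "z * (2 * real k + 1) < 1" using assms(3) p by (simp add: field_simps)
  have z1: "z < 1" using zb assms by (smt (verit) mult_le_cancel_left1 of_nat_0_le_iff)
  show x0: "0 < x" using assms z1 by simp
  have "1 - z < 2 * real k" using assms by linarith
  then show "x < 1" using assms by (simp add: divide_less_eq)
  have u: "1/x = 2 * real k / (1 - z)" using assms by simp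
  have u1: "2 * real k < 1/x" unfolding u using assms z1 by (simp add: field_simps)
  have u2: "1/x < 2 * real k + 1" unfolding u using zb z1 by (simp add: field_simps)
  have f: "\<lfloor>1/x\<rfloor> = 2 * int k" by (rule floor_unique) (use u1 u2 in auto)
  show "d1 x = 2 * int k" "s1 x = -1" using d1_reg2[OF x0 assms(1) u1] u2 f by auto
  show "Tmap x = z" using T_reg2[OF x0 assms(1) u1 u2] assms by simp
qed

lemma funpow_shift: "(Tmap ^^ Suc i) x = (Tmap ^^ i) (Tmap x)"
  by (simp only: funpow_Suc_right comp_def)

lemma digit_shift: "i \<ge> 1 \<Longrightarrow> digit (Suc i) x = digit i (Tmap x)"
  unfolding digit_def by (cases i) (simp_all add: funpow_shift del: funpow.simps)

lemma sdigit_shift: "i \<ge> 1 \<Longrightarrow> sdigit (Suc i) x = sdigit i (Tmap x)"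
  unfolding sdigit_def by (cases i) (simp_all add: funpow_shift del: funpow.simps)

lemma eps2: "eps 2 x = s1 x"
proof -
  have "{1..<2::nat} = {1}" by auto
  then show ?thesis by (simp add: eps_def sdigit_def)
qed

lemma eps_shift:
  assumes "i \<ge> 1"
  shows "eps (Suc i) x = s1 x * eps i (Tmap x)"
proof -
  have "eps (Suc i) x = sdigit 1 x * (\<Prod>k\<in>{Suc 1..<Suc i}. sdigit k x)"
    unfolding eps_def by (rule prod.atLeast_Suc_lessThan) (use assms in simp)
  also have "(\<Prod>k\<in>{Suc 1..<Suc i}. sdigit k x) = (\<Prod>k\<in>{1..<i}. sdigit (Suc k) x)"
    by (rule prod.shift_bounds_Suc_ivl)
  also have "\<dots> = (\<Prod>k\<in>{1..<i}. sdigit k (Tmap x))"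
    by (rule prod.cong) (auto simp: sdigit_shift)
  finally show ?thesis by (simp add: sdigit_def eps_def)
qed

lemma digit1: "digit 1 x = d1 x" "digit (Suc 0) x = d1 x" by (simp_all add: digit_def)


lemma cyl_shift:
  assumes n: "n \<ge> 1" and d2: "\<delta> 2 = 1 \<or> \<delta> 2 = -1"
  shows "x \<in> cyl (Suc n) \<sigma> \<delta> \<longleftrightarrow>
    0 < x \<and> x < 1 \<and> d1 x = int (\<sigma> 1) \<and> s1 x = \<delta> 2 \<and>
    Tmap x \<in> cyl n (\<lambda>i. \<sigma> (Suc i)) (\<lambda>i. \<delta> 2 * \<delta> (Suc i))"
proof
  assume x: "x \<in> cyl (Suc n) \<sigma> \<delta>"
  then have x01: "0 < x" "x < 1"
    and dg: "\<And>i. i \<in> {1..Suc n} \<Longrightarrow> (Tmap ^^ (i - 1)) x \<noteq> 0 \<and> digit i x = int (\<sigma> i)"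
    and ep: "\<And>i. i \<in> {2..Suc n} \<Longrightarrow> eps i x = \<delta> i"
    unfolding cyl_def by auto
  have "digit 1 x = int (\<sigma> 1)" using dg[of 1] by simp
  then have dd: "d1 x = int (\<sigma> 1)" by (simp add: digit1)
  have ss: "s1 x = \<delta> 2" using ep[of 2] n by (simp add: eps2)
  have T0: "Tmap x \<noteq> 0" using dg[of 2] n by simp
  have T01: "0 < Tmap x" "Tmap x < 1" using T_inv[OF x01] T0 by auto
  have "Tmap x \<in> cyl n (\<lambda>i. \<sigma> (Suc i)) (\<lambda>i. \<delta> 2 * \<delta> (Suc i))"
    unfolding cyl_def
  proof (intro CollectI conjI ballI T01)
    fix i assume i: "i \<in> {1..n}"
    then have "Suc i \<in> {1..Suc n}" by auto
    from dg[OF this] i show "(Tmap ^^ (i - 1)) (Tmap x) \<noteq> 0" "digit i (Tmap x) = int (\<sigma> (Suc i))"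
      by (auto simp: digit_shift simp flip: funpow_shift)
  next
    fix i assume i: "i \<in> {2..n}"
    then have "Suc i \<in> {2..Suc n}" by auto
    from ep[OF this] i have "\<delta> 2 * eps i (Tmap x) = \<delta> (Suc i)"
      by (simp add: eps_shift ss)
    then show "eps i (Tmap x) = \<delta> 2 * \<delta> (Suc i)" using d2 by auto
  qed
  then show "0 < x \<and> x < 1 \<and> d1 x = int (\<sigma> 1) \<and> s1 x = \<delta> 2 \<and>
    Tmap x \<in> cyl n (\<lambda>i. \<sigma> (Suc i)) (\<lambda>i. \<delta> 2 * \<delta> (Suc i))"
    using x01 dd ss by simp
next
  assume "0 < x \<and> x < 1 \<and> d1 x = int (\<sigma> 1) \<and> s1 x = \<delta> 2 \<and>
    Tmap x \<in> cyl n (\<lambda>i. \<sigma> (Suc i)) (\<lambda>i. \<delta> 2 * \<delta> (Suc i))"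
  then have x01: "0 < x" "x < 1" and dd: "d1 x = int (\<sigma> 1)" and ss: "s1 x = \<delta> 2"
    and dg: "\<And>i. i \<in> {1..n} \<Longrightarrow> (Tmap ^^ (i - 1)) (Tmap x) \<noteq> 0 \<and> digit i (Tmap x) = int (\<sigma> (Suc i))"
    and ep: "\<And>i. i \<in> {2..n} \<Longrightarrow> eps i (Tmap x) = \<delta> 2 * \<delta> (Suc i)"
    unfolding cyl_def by auto
  show "x \<in> cyl (Suc n) \<sigma> \<delta>"
    unfolding cyl_def
  proof (intro CollectI conjI ballI x01)
    fix i assume i: "i \<in> {1..Suc n}"
    have "(Tmap ^^ (i - 1)) x \<noteq> 0 \<and> digit i x = int (\<sigma> i)"
    proof (cases "i = 1")
      case True
      then show ?thesis using x01 dd by (simp add: digit1)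
    next
      case False
      then obtain j where j: "i = Suc j" "j \<in> {1..n}" using i by (cases i) auto
      from dg[OF j(2)] j show ?thesis
        by (cases j) (auto simp: digit_shift funpow_shift simp del: funpow.simps)
    qed
    then show "(Tmap ^^ (i - 1)) x \<noteq> 0" "digit i x = int (\<sigma> i)" by auto
  next
    fix i assume i: "i \<in> {2..Suc n}"
    show "eps i x = \<delta> i"
    proof (cases "i = 2")
      case True
      then show ?thesis using ss by (simp add: eps2)
    next
      case False
      then obtain j where j: "i = Suc j" "j \<in> {2..n}" using i by (cases i) auto
      have "eps i x = \<delta> 2 * (\<delta> 2 * \<delta> (Suc j))" using ep[OF j(2)] j by (simp add: eps_shift ss)
      also have "\<dots> = \<delta> (Suc j)" using d2 by auto
      finally show ?thesis using j by simp
    qed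
  qed
qed

lemma in_Sigma_first:
  assumes "in_Sigma (Suc n) \<sigma> \<delta>" "n \<ge> 1"
  shows "\<sigma> 1 \<le> \<sigma> 2" "even (\<sigma> 1)" "\<delta> 2 = -1 \<Longrightarrow> \<sigma> 1 + 2 \<le> \<sigma> 2"
    "\<delta> 2 = 1 \<or> \<delta> 2 = -1" "\<sigma> 1 \<ge> 2" "\<delta> 1 = 1"
proof -
  have i1: "(1::nat) \<in> {1..<Suc n}" using assms by simp
  have A: "\<forall>i\<in>{1..<Suc n}. \<sigma> i \<le> \<sigma> (i+1)" "\<forall>i\<in>{1..<Suc n}. even (\<sigma> i)"
    "\<forall>i\<in>{1..<Suc n}. \<delta> (i+1) = - \<delta> i \<longrightarrow> \<sigma> (i+1) \<ge> \<sigma> i + 2"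
    "\<forall>i\<in>{2..Suc n}. \<delta> i = 1 \<or> \<delta> i = -1" "\<sigma> 1 \<ge> 2" "\<delta> 1 = 1"
    using assms(1) unfolding in_Sigma_def by blast+
  have "\<sigma> 1 \<le> \<sigma> (1+1)" using bspec[OF A(1) i1] .
  then show "\<sigma> 1 \<le> \<sigma> 2" by (simp only: one_add_one)
  show "even (\<sigma> 1)" using bspec[OF A(2) i1] .
  show "\<delta> 2 = 1 \<or> \<delta> 2 = -1" using A(4) assms(2) by auto
  show "\<sigma> 1 \<ge> 2" "\<delta> 1 = 1" using A by auto
  assume "\<delta> 2 = -1"
  then have "\<delta> (1+1) = - \<delta> 1" using A(6) by (simp only: one_add_one)
  then have "\<sigma> (1+1) \<ge> \<sigma> 1 + 2" using bspec[OF A(3) i1] by blast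
  then show "\<sigma> 1 + 2 \<le> \<sigma> 2" by (simp only: one_add_one)
qed

lemma in_Sigma_shift:
  assumes "in_Sigma (Suc n) \<sigma> \<delta>" "n \<ge> 1"
  shows "in_Sigma n (\<lambda>i. \<sigma> (Suc i)) (\<lambda>i. \<delta> 2 * \<delta> (Suc i))"
proof -
  have d2: "\<delta> 2 = 1 \<or> \<delta> 2 = -1" using assms unfolding in_Sigma_def by auto
  have sq: "\<delta> 2 * \<delta> 2 = 1" using d2 by auto
  have m: "\<sigma> 1 \<le> \<sigma> 2" using in_Sigma_first[OF assms] by auto
  show ?thesis using assms unfolding in_Sigma_def
  proof (intro conjI ballI)
    fix i assume i: "i \<in> {2..n}"
    then have "Suc i \<in> {2..Suc n}" by auto
    then have "\<delta> (Suc i) = 1 \<or> \<delta> (Suc i) = -1" using assms unfolding in_Sigma_def by blast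
    then show "\<delta> 2 * \<delta> (Suc i) = 1 \<or> \<delta> 2 * \<delta> (Suc i) = -1" using d2 by auto
  next
    fix i assume i: "i \<in> {1..<n}"
    then have "Suc i \<in> {1..<Suc n}" by auto
    then show "\<sigma> (Suc i) \<le> \<sigma> (Suc (i+1))" "even (\<sigma> (Suc i))" using assms unfolding in_Sigma_def by auto
    show "\<delta> 2 * \<delta> (Suc (i + 1)) = - (\<delta> 2 * \<delta> (Suc i)) \<longrightarrow> \<sigma> (Suc i) + 2 \<le> \<sigma> (Suc (i + 1))"
    proof
      assume "\<delta> 2 * \<delta> (Suc (i + 1)) = - (\<delta> 2 * \<delta> (Suc i))"
      then have "\<delta> (Suc i + 1) = - \<delta> (Suc i)" using d2 by auto
      then show "\<sigma> (Suc i) + 2 \<le> \<sigma> (Suc (i + 1))"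
        using assms \<open>Suc i \<in> {1..<Suc n}\<close> unfolding in_Sigma_def by auto
    qed
  next
    show "\<delta> 2 * \<delta> (Suc 1) = 1" using sq by (simp add: numeral_2_eq_2)
    show "2 \<le> \<sigma> (Suc 1)" using m in_Sigma_first[OF assms] by (simp add: numeral_2_eq_2)
  qed
qed

lemma cyl_image:
  assumes S: "in_Sigma (Suc n) \<sigma> \<delta>" and n: "n \<ge> 1"
  shows "cyl (Suc n) \<sigma> \<delta> = (\<lambda>z. (1 + real_of_int (\<delta> 2) * z) / real (\<sigma> 1)) `
           cyl n (\<lambda>i. \<sigma> (Suc i)) (\<lambda>i. \<delta> 2 * \<delta> (Suc i))"
proof -
  note F = in_Sigma_first[OF S n]
  have d2: "\<delta> 2 = 1 \<or> \<delta> 2 = -1" and ev: "even (\<sigma> 1)" and s1ge: "\<sigma> 1 \<ge> 2"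
    and m: "\<sigma> 1 \<le> \<sigma> 2" and m2: "\<delta> 2 = -1 \<Longrightarrow> \<sigma> 1 + 2 \<le> \<sigma> 2" using F by auto
  obtain k where k: "\<sigma> 1 = 2 * k" using ev by blast
  have k1: "k \<ge> 1" using s1ge k by simp
  note sh = cyl_shift[where n=n and \<sigma>=\<sigma> and \<delta>=\<delta>, OF n d2]
  show ?thesis
  proof (intro set_eqI iffI)
    fix x assume "x \<in> cyl (Suc n) \<sigma> \<delta>"
    then have x: "0 < x" "x < 1" "d1 x = int (\<sigma> 1)" "s1 x = \<delta> 2"
      "Tmap x \<in> cyl n (\<lambda>i. \<sigma> (Suc i)) (\<lambda>i. \<delta> 2 * \<delta> (Suc i))" using sh by auto
    have "x = (1 + real_of_int (\<delta> 2) * Tmap x) / real (\<sigma> 1)" using T_inv(1)[OF x(1,2)] x(3,4) by simp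
    with x(5) show "x \<in> (\<lambda>z. (1 + real_of_int (\<delta> 2) * z) / real (\<sigma> 1)) `
           cyl n (\<lambda>i. \<sigma> (Suc i)) (\<lambda>i. \<delta> 2 * \<delta> (Suc i))" by blast
  next
    fix x assume "x \<in> (\<lambda>z. (1 + real_of_int (\<delta> 2) * z) / real (\<sigma> 1)) `
           cyl n (\<lambda>i. \<sigma> (Suc i)) (\<lambda>i. \<delta> 2 * \<delta> (Suc i))"
    then obtain z where z: "z \<in> cyl n (\<lambda>i. \<sigma> (Suc i)) (\<lambda>i. \<delta> 2 * \<delta> (Suc i))"
      and xz: "x = (1 + real_of_int (\<delta> 2) * z) / real (\<sigma> 1)" by blast
    have "digit 1 z = int (\<sigma> 2)" using z n unfolding cyl_def by (auto simp: numeral_2_eq_2)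
    then have "z \<in> Yset (\<sigma> 2)" using z unfolding cyl_def Yset_def by (simp add: digit1)
    from Y_bound[OF _ this] m s1ge have zb: "0 < z" "z < 1 / (real (\<sigma> 2) - 1)" by auto
    from z have zc: "Tmap x = z \<Longrightarrow> Tmap x \<in> cyl n (\<lambda>i. \<sigma> (Suc i)) (\<lambda>i. \<delta> 2 * \<delta> (Suc i))" by simp
    from d2 show "x \<in> cyl (Suc n) \<sigma> \<delta>"
    proof
      assume d: "\<delta> 2 = 1"
      have "2 * real k - 1 \<le> real (\<sigma> 2) - 1" using m k by simp
      then have "1 / (real (\<sigma> 2) - 1) \<le> 1 / (2 * real k - 1)" using k1
        by (intro divide_left_mono) auto
      then have zb2: "z < 1 / (2 * real k - 1)" using zb by linarith
      have xe: "x = (1 + z) / (2 * real k)" using xz d k by simp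
      note f = fwd1[OF k1 zb(1) zb2 xe]
      show ?thesis using sh f zc k d by simp
    next
      assume d: "\<delta> 2 = -1"
      have "2 * real k + 1 \<le> real (\<sigma> 2) - 1" using m2[OF d] k by simp
      then have "1 / (real (\<sigma> 2) - 1) \<le> 1 / (2 * real k + 1)" using k1
        by (intro divide_left_mono) auto
      then have zb2: "z < 1 / (2 * real k + 1)" using zb by linarith
      have xe: "x = (1 - z) / (2 * real k)" using xz d k by simp
      note f = fwd2[OF k1 zb(1) zb2 xe]
      show ?thesis using sh f zc k d by simp
    qed
  qed
qed

definition Sfun :: "nat \<Rightarrow> (nat \<Rightarrow> nat) \<Rightarrow> (nat \<Rightarrow> int) \<Rightarrow> real" where
  "Sfun n \<sigma> \<delta> = (\<Sum>i\<in>{1..<n}. real_of_int (\<delta> i) / (\<Prod>j\<in>{1..i}. real (\<sigma> j)))"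

definition Qfun :: "nat \<Rightarrow> (nat \<Rightarrow> nat) \<Rightarrow> real" where
  "Qfun n \<sigma> = (\<Prod>j\<in>{1..<n}. real (\<sigma> j))"

lemma sigma_ge2: "in_Sigma n \<sigma> \<delta> \<Longrightarrow> 1 \<le> i \<Longrightarrow> i \<le> n \<Longrightarrow> \<sigma> i \<ge> 2"
proof (induction i)
  case 0 then show ?case by simp
next
  case (Suc i)
  show ?case
  proof (cases "i = 0")
    case True then show ?thesis using Suc.prems unfolding in_Sigma_def by simp
  next
    case False
    then have "i \<in> {1..<n}" using Suc.prems by auto
    then have "\<sigma> i \<le> \<sigma> (i+1)" using Suc.prems unfolding in_Sigma_def by blast
    moreover have "\<sigma> i \<ge> 2" using Suc False by simp
    ultimately show ?thesis by simp
  qed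
qed

lemma Qfun_pos: "in_Sigma n \<sigma> \<delta> \<Longrightarrow> Qfun n \<sigma> > 0"
  unfolding Qfun_def by (rule prod_pos) (use sigma_ge2[of n \<sigma> \<delta>] in fastforce)

lemma Qfun_shift: "n \<ge> 1 \<Longrightarrow> Qfun (Suc n) \<sigma> = real (\<sigma> 1) * Qfun n (\<lambda>i. \<sigma> (Suc i))"
proof -
  assume n: "n \<ge> 1"
  have "Qfun (Suc n) \<sigma> = real (\<sigma> 1) * (\<Prod>j\<in>{Suc 1..<Suc n}. real (\<sigma> j))"
    unfolding Qfun_def by (rule prod.atLeast_Suc_lessThan) (use n in simp)
  also have "(\<Prod>j\<in>{Suc 1..<Suc n}. real (\<sigma> j)) = Qfun n (\<lambda>i. \<sigma> (Suc i))"
    unfolding Qfun_def by (rule prod.shift_bounds_Suc_ivl)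
  finally show ?thesis .
qed

lemma P_shift: "(\<Prod>j\<in>{1..Suc i}. real (\<sigma> j)) = real (\<sigma> 1) * (\<Prod>j\<in>{1..i}. real (\<sigma> (Suc j)))"
proof -
  have "(\<Prod>j\<in>{1..Suc i}. real (\<sigma> j)) = real (\<sigma> 1) * (\<Prod>j\<in>{Suc 1..Suc i}. real (\<sigma> j))"
    by (rule prod.atLeast_Suc_atMost) simp
  also have "(\<Prod>j\<in>{Suc 1..Suc i}. real (\<sigma> j)) = (\<Prod>j\<in>{1..i}. real (\<sigma> (Suc j)))"
    by (rule prod.shift_bounds_cl_Suc_ivl)
  finally show ?thesis .
qed

lemma Sfun_shift:
  assumes n: "n \<ge> 1" and d1: "\<delta> 1 = 1" and sq: "\<delta> 2 * \<delta> 2 = 1"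
  shows "Sfun (Suc n) \<sigma> \<delta> = 1 / real (\<sigma> 1) +
     real_of_int (\<delta> 2) * Sfun n (\<lambda>i. \<sigma> (Suc i)) (\<lambda>i. \<delta> 2 * \<delta> (Suc i)) / real (\<sigma> 1)"
proof -
  define f where "f i = real_of_int (\<delta> i) / (\<Prod>j\<in>{1..i}. real (\<sigma> j))" for i
  have "Sfun (Suc n) \<sigma> \<delta> = f 1 + (\<Sum>i\<in>{Suc 1..<Suc n}. f i)"
    unfolding Sfun_def f_def by (rule sum.atLeast_Suc_lessThan) (use n in simp)
  also have "(\<Sum>i\<in>{Suc 1..<Suc n}. f i) = (\<Sum>i\<in>{1..<n}. f (Suc i))"
    by (rule sum.shift_bounds_Suc_ivl)
  also have "\<dots> = (\<Sum>i\<in>{1..<n}. real_of_int (\<delta> 2) * (real_of_int (\<delta> 2 * \<delta> (Suc i)) /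
        (\<Prod>j\<in>{1..i}. real (\<sigma> (Suc j)))) / real (\<sigma> 1))"
  proof (rule sum.cong[OF refl])
    fix i
    have e: "real_of_int (\<delta> 2) * real_of_int (\<delta> 2 * \<delta> (Suc i)) = real_of_int (\<delta> (Suc i))"
    proof -
      have "real_of_int (\<delta> 2) * real_of_int (\<delta> 2 * \<delta> (Suc i)) = real_of_int ((\<delta> 2 * \<delta> 2) * \<delta> (Suc i))"
        by (simp add: mult.assoc)
      then show ?thesis using sq by simp
    qed
    show "f (Suc i) = real_of_int (\<delta> 2) * (real_of_int (\<delta> 2 * \<delta> (Suc i)) /
        (\<Prod>j\<in>{1..i}. real (\<sigma> (Suc j)))) / real (\<sigma> 1)"
      unfolding f_def P_shift using e by (simp add: field_simps)
  qed
  also have "\<dots> = real_of_int (\<delta> 2) * Sfun n (\<lambda>i. \<sigma> (Suc i)) (\<lambda>i. \<delta> 2 * \<delta> (Suc i)) / real (\<sigma> 1)"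
    unfolding Sfun_def by (simp add: sum_distrib_left sum_divide_distrib)
  also have "f 1 = 1 / real (\<sigma> 1)" unfolding f_def using d1 by simp
  finally show ?thesis .
qed

lemma cyl_formula:
  "in_Sigma n \<sigma> \<delta> \<Longrightarrow>
   cyl n \<sigma> \<delta> = (\<lambda>y. Sfun n \<sigma> \<delta> + real_of_int (\<delta> n) * y / Qfun n \<sigma>) ` Yset (\<sigma> n)"
proof (induction n arbitrary: \<sigma> \<delta>)
  case 0 then show ?case unfolding in_Sigma_def by simp
next
  case (Suc n)
  show ?case
  proof (cases "n = 0")
    case True
    have d: "\<delta> 1 = 1" using Suc.prems unfolding in_Sigma_def by simp
    have "cyl 1 \<sigma> \<delta> = Yset (\<sigma> 1)" unfolding cyl_def Yset_def by (auto simp: digit1)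
    moreover have "Sfun 1 \<sigma> \<delta> = 0" "Qfun 1 \<sigma> = 1" by (simp_all add: Sfun_def Qfun_def)
    ultimately show ?thesis using True d by simp
  next
    case False
    then have n: "n \<ge> 1" by simp
    note F = in_Sigma_first[OF Suc.prems n]
    have sq: "\<delta> 2 * \<delta> 2 = 1" using F(4) by auto
    have S': "in_Sigma n (\<lambda>i. \<sigma> (Suc i)) (\<lambda>i. \<delta> 2 * \<delta> (Suc i))" by (rule in_Sigma_shift[OF Suc.prems n])
    note IH = Suc.IH[OF S']
    have Qp: "Qfun n (\<lambda>i. \<sigma> (Suc i)) > 0" by (rule Qfun_pos[OF S'])
    have s0: "real (\<sigma> 1) > 0" using F(5) by simp
    have "cyl (Suc n) \<sigma> \<delta> = (\<lambda>z. (1 + real_of_int (\<delta> 2) * z) / real (\<sigma> 1)) `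
           cyl n (\<lambda>i. \<sigma> (Suc i)) (\<lambda>i. \<delta> 2 * \<delta> (Suc i))" by (rule cyl_image[OF Suc.prems n])
    also have "\<dots> = (\<lambda>y. Sfun (Suc n) \<sigma> \<delta> + real_of_int (\<delta> (Suc n)) * y / Qfun (Suc n) \<sigma>) ` Yset (\<sigma> (Suc n))"
      unfolding IH image_image
    proof (rule image_cong[OF refl])
      fix y
      have e: "real_of_int (\<delta> 2) * real_of_int (\<delta> 2 * \<delta> (Suc n)) = real_of_int (\<delta> (Suc n))"
      proof -
        have "real_of_int (\<delta> 2) * real_of_int (\<delta> 2 * \<delta> (Suc n)) = real_of_int ((\<delta> 2 * \<delta> 2) * \<delta> (Suc n))"
          by (simp add: mult.assoc)
        then show ?thesis using sq by simp
      qed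
      show "(1 + real_of_int (\<delta> 2) * (Sfun n (\<lambda>i. \<sigma> (Suc i)) (\<lambda>i. \<delta> 2 * \<delta> (Suc i)) +
             real_of_int (\<delta> 2 * \<delta> (Suc n)) * y / Qfun n (\<lambda>i. \<sigma> (Suc i)))) / real (\<sigma> 1) =
          Sfun (Suc n) \<sigma> \<delta> + real_of_int (\<delta> (Suc n)) * y / Qfun (Suc n) \<sigma>"
        unfolding Sfun_shift[OF n F(6) sq] Qfun_shift[OF n] using Qp s0 e[symmetric]
        by (simp add: field_simps)
    qed
    finally show ?thesis .
  qed
qed

lemma aff_img_pos:
  fixes a c l r :: real assumes c: "c > 0"
  shows "(\<lambda>y. a + c * y) ` {l<..<r} = {a + c * l<..<a + c * r}"
proof (intro set_eqI iffI)
  fix x assume "x \<in> (\<lambda>y. a + c * y) ` {l<..<r}"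
  then obtain y where "l < y" "y < r" "x = a + c * y" by auto
  then show "x \<in> {a + c * l<..<a + c * r}" using c by auto
next
  fix x assume x: "x \<in> {a + c * l<..<a + c * r}"
  have "x = a + c * ((x - a) / c)" using c by simp
  moreover have "l < (x - a) / c" "(x - a) / c < r" using x c by (auto simp: field_simps)
  ultimately show "x \<in> (\<lambda>y. a + c * y) ` {l<..<r}" by (intro image_eqI) auto
qed

lemma aff_img_neg:
  fixes a c l r :: real assumes c: "c < 0"
  shows "(\<lambda>y. a + c * y) ` {l<..<r} = {a + c * r<..<a + c * l}"
proof (intro set_eqI iffI)
  fix x assume "x \<in> (\<lambda>y. a + c * y) ` {l<..<r}"
  then obtain y where "l < y" "y < r" "x = a + c * y" by auto
  then show "x \<in> {a + c * r<..<a + c * l}" using c by auto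
next
  fix x assume x: "x \<in> {a + c * r<..<a + c * l}"
  have "x = a + c * ((x - a) / c)" using c by simp
  moreover have "l < (x - a) / c" "(x - a) / c < r" using x c by (auto simp: field_simps)
  ultimately show "x \<in> (\<lambda>y. a + c * y) ` {l<..<r}" by (intro image_eqI) auto
qed

theorem proposition2p2:
  fixes n :: nat and \<sigma> :: "nat \<Rightarrow> nat" and \<delta> :: "nat \<Rightarrow> int"
  assumes "in_Sigma n \<sigma> \<delta>"
  defines "S \<equiv> (\<Sum>i\<in>{1..<n}. real_of_int (\<delta> i) / (\<Prod>j\<in>{1..i}. real (\<sigma> j)))"
  defines "x1 \<equiv> S + real_of_int (\<delta> n) / ((\<Prod>j\<in>{1..<n}. real (\<sigma> j)) * (real (\<sigma> n) - 1))"
  defines "x2 \<equiv> S + real_of_int (\<delta> n) / ((\<Prod>j\<in>{1..<n}. real (\<sigma> j)) * (real (\<sigma> n) + 1))"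
  shows "(odd (\<sigma> n) \<longrightarrow>
            (\<exists>y. cyl n \<sigma> \<delta> = {y}) \<and> measure lborel (cyl n \<sigma> \<delta>) = 0) \<and>
         (even (\<sigma> n) \<longrightarrow>
            (\<delta> n = -1 \<longrightarrow> cyl n \<sigma> \<delta> = {x1<..<x2}) \<and>
            (\<delta> n = 1 \<longrightarrow> cyl n \<sigma> \<delta> = {x2<..<x1}) \<and>
            measure lborel (cyl n \<sigma> \<delta>) =
              2 / ((\<Prod>j\<in>{1..<n}. real (\<sigma> j)) * (real (\<sigma> n) - 1) * (real (\<sigma> n) + 1)))"
proof -
  define Q where "Q = (\<Prod>j\<in>{1..<n}. real (\<sigma> j))"
  have Qp: "Q > 0" using Qfun_pos[OF assms(1)] unfolding Q_def Qfun_def .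
  have n1: "n \<ge> 1" using assms(1) unfolding in_Sigma_def by simp
  have sg: "\<sigma> n \<ge> 2" using sigma_ge2[OF assms(1) n1] by simp
  have dn: "\<delta> n = 1 \<or> \<delta> n = -1"
  proof (cases "n = 1")
    case True then show ?thesis using assms(1) unfolding in_Sigma_def by simp
  next
    case False then show ?thesis using assms(1) n1 unfolding in_Sigma_def by auto
  qed
  have C: "cyl n \<sigma> \<delta> = (\<lambda>y. S + (real_of_int (\<delta> n) / Q) * y) ` Yset (\<sigma> n)"
    unfolding cyl_formula[OF assms(1)] S_def Q_def Sfun_def Qfun_def by (simp add: field_simps)
  have odd_part: "odd (\<sigma> n) \<longrightarrow> (\<exists>y. cyl n \<sigma> \<delta> = {y}) \<and> measure lborel (cyl n \<sigma> \<delta>) = 0"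
  proof
    assume "odd (\<sigma> n)"
    then obtain k where k: "\<sigma> n = 2*k+1" using oddE by blast
    then have k1: "k \<ge> 1" using sg by simp
    have "cyl n \<sigma> \<delta> = {S + (real_of_int (\<delta> n) / Q) * (1 / (2 * real k + 1))}"
      unfolding C k Y_odd[OF k1] by simp
    then show "(\<exists>y. cyl n \<sigma> \<delta> = {y}) \<and> measure lborel (cyl n \<sigma> \<delta>) = 0" by auto
  qed
  have even_part: "even (\<sigma> n) \<longrightarrow>
            (\<delta> n = -1 \<longrightarrow> cyl n \<sigma> \<delta> = {x1<..<x2}) \<and>
            (\<delta> n = 1 \<longrightarrow> cyl n \<sigma> \<delta> = {x2<..<x1}) \<and>
            measure lborel (cyl n \<sigma> \<delta>) =
              2 / (Q * (real (\<sigma> n) - 1) * (real (\<sigma> n) + 1))"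
  proof
    assume "even (\<sigma> n)"
    then obtain k where k: "\<sigma> n = 2*k" by blast
    then have k1: "k \<ge> 1" using sg by simp
    have rk: "real (\<sigma> n) = 2 * real k" using k by simp
    have p1: "2 * real k - 1 > 0" "2 * real k + 1 > 0" using k1 by auto
    have Y: "Yset (\<sigma> n) = {1 / (2 * real k + 1)<..<1 / (2 * real k - 1)}" unfolding k by (rule Y_even[OF k1])
    have e1: "x1 = S + (real_of_int (\<delta> n) / Q) * (1 / (2 * real k - 1))"
      unfolding x1_def Q_def[symmetric] rk by simp
    have e2: "x2 = S + (real_of_int (\<delta> n) / Q) * (1 / (2 * real k + 1))"
      unfolding x2_def Q_def[symmetric] rk by simp
    have A: "\<delta> n = -1 \<longrightarrow> cyl n \<sigma> \<delta> = {x1<..<x2}"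
    proof
      assume d: "\<delta> n = -1"
      have "real_of_int (\<delta> n) / Q < 0" using d Qp by simp
      from aff_img_neg[OF this] show "cyl n \<sigma> \<delta> = {x1<..<x2}" unfolding C Y e1 e2 by (simp add: ac_simps)
    qed
    have B: "\<delta> n = 1 \<longrightarrow> cyl n \<sigma> \<delta> = {x2<..<x1}"
    proof
      assume d: "\<delta> n = 1"
      have "real_of_int (\<delta> n) / Q > 0" using d Qp by simp
      from aff_img_pos[OF this] show "cyl n \<sigma> \<delta> = {x2<..<x1}" unfolding C Y e1 e2 by (simp add: ac_simps)
    qed
    have L: "1 / (2 * real k - 1) - 1 / (2 * real k + 1) = 2 / ((2 * real k - 1) * (2 * real k + 1))"
      using p1 by (simp add: field_simps)
    have M: "measure lborel (cyl n \<sigma> \<delta>) = 2 / (Q * (real (\<sigma> n) - 1) * (real (\<sigma> n) + 1))"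
      using dn
    proof
      assume d: "\<delta> n = 1"
      have "x2 \<le> x1" unfolding e1 e2 d using Qp p1 by (simp add: frac_le)
      then have "measure lborel (cyl n \<sigma> \<delta>) = x1 - x2" using B d by simp
      also have "\<dots> = (1 / Q) * (1 / (2 * real k - 1) - 1 / (2 * real k + 1))"
        unfolding e1 e2 d by (simp add: algebra_simps)
      finally show ?thesis unfolding L rk by simp
    next
      assume d: "\<delta> n = -1"
      have "x1 \<le> x2" unfolding e1 e2 d using Qp p1 by (simp add: frac_le)
      then have "measure lborel (cyl n \<sigma> \<delta>) = x2 - x1" using A d by simp
      also have "\<dots> = (1 / Q) * (1 / (2 * real k - 1) - 1 / (2 * real k + 1))"
        unfolding e1 e2 d by (simp add: algebra_simps)
      finally show ?thesis unfolding L rk by simp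
    qed
    show "(\<delta> n = -1 \<longrightarrow> cyl n \<sigma> \<delta> = {x1<..<x2}) \<and>
            (\<delta> n = 1 \<longrightarrow> cyl n \<sigma> \<delta> = {x2<..<x1}) \<and>
            measure lborel (cyl n \<sigma> \<delta>) =
              2 / (Q * (real (\<sigma> n) - 1) * (real (\<sigma> n) + 1))" using A B M by blast
  qed
  show ?thesis using odd_part even_part unfolding Q_def by blast
qed

end
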